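(* Let $A\cong \mathbb{Z}_2^r\times N$, where $r\ge 0$ is an integer and $N$ is a non-cyclic abelian group of odd order, let $n=|A|$, and let $m$ be the number of elements of $A$ of order at most $2$. Let $\Gamma=\Gamma(A,S)$ be a Cayley graph on $A$ (for some inverse-closed $S\subseteq A\setminus\{0\}$) such that $\mathrm{Aut}(\Gamma)=A\rtimes\langle i\rangle$. If $\chi(\Gamma)<\frac{n}{m+2\log(2n)}$, then $\chi_D(\Gamma)\le\chi(\Gamma)+1$.
   Context: The Cayley graph $\Gamma(A,S)$ has vertex set $A$, with $x,y$ adjacent iff $y-x\in S$. $i:A\to A$ is $i(x)=-x$, and $A\rtimes\langle i\rangle$ denotes the group of permutations of $A$ generated by the translations $x\mapsto x+g$ ($g\in A$) and $i$. $\chi$ is the chromatic number; the distinguishing chromatic number $\chi_D(G)$ is the least $r$ such that $V(G)$ can be partitioned into independent sets $V_1,\dots,V_r$ such that for every non-identity automorphism $\pi$ of $G$ there is some $j$ with $\pi(V_j)\ne V_j$. $\log$ denotes $\log_2$. *)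

theory Defs
  imports Complex_Main
begin

definition nat_mult :: "nat \<Rightarrow> 'a::ab_group_add \<Rightarrow> 'a" where
  "nat_mult k g = ((+) g ^^ k) 0"

definition add_subgroup :: "'a::ab_group_add set \<Rightarrow> bool" where
  "add_subgroup H \<longleftrightarrow> 0 \<in> H \<and> (\<forall>x\<in>H. \<forall>y\<in>H. x + y \<in> H) \<and> (\<forall>x\<in>H. - x \<in> H)"

definition cyclic_subgroup :: "'a::ab_group_add set \<Rightarrow> bool" where
  "cyclic_subgroup H \<longleftrightarrow> (\<exists>g\<in>H. H = {nat_mult k g | k. True})"

text \<open>A is (internally) isomorphic to Z_2^r x N with N a non-cyclic group of odd order:
  A is the internal direct sum of an elementary abelian 2-subgroup E and a
  non-cyclic subgroup N of odd order.\<close>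
definition Z2r_times_noncyclic_odd :: "'a::{ab_group_add,finite} itself \<Rightarrow> bool" where
  "Z2r_times_noncyclic_odd _ \<longleftrightarrow>
     (\<exists>E N :: 'a set. add_subgroup E \<and> add_subgroup N \<and> (\<forall>x\<in>E. x + x = 0)
        \<and> odd (card N) \<and> \<not> cyclic_subgroup N
        \<and> E \<inter> N = {0} \<and> {e + x | e x. e \<in> E \<and> x \<in> N} = UNIV)"

definition cay_adj :: "'a::ab_group_add set \<Rightarrow> 'a \<Rightarrow> 'a \<Rightarrow> bool" where
  "cay_adj S x y \<longleftrightarrow> y - x \<in> S"

definition cay_aut :: "'a::ab_group_add set \<Rightarrow> ('a \<Rightarrow> 'a) set" where
  "cay_aut S = {\<pi>. bij \<pi> \<and> (\<forall>x y. cay_adj S x y \<longleftrightarrow> cay_adj S (\<pi> x) (\<pi> y))}"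

text \<open>A semidirect product with i, as a permutation group: translations and x \<mapsto> -x + g.\<close>
definition transl_inv_group :: "('a::ab_group_add \<Rightarrow> 'a) set" where
  "transl_inv_group = {(\<lambda>x. x + g) | g. True} \<union> {(\<lambda>x. - x + g) | g. True}"

definition proper_colouring :: "'a::ab_group_add set \<Rightarrow> nat \<Rightarrow> ('a \<Rightarrow> nat) \<Rightarrow> bool" where
  "proper_colouring S k c \<longleftrightarrow> (\<forall>x. c x < k) \<and> (\<forall>x y. cay_adj S x y \<longrightarrow> c x \<noteq> c y)"

definition chromatic_number :: "'a::ab_group_add set \<Rightarrow> nat" where
  "chromatic_number S = (LEAST k. \<exists>c. proper_colouring S k c)"

definition distinguishing_colouring :: "'a::ab_group_add set \<Rightarrow> nat \<Rightarrow> ('a \<Rightarrow> nat) \<Rightarrow> bool" where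
  "distinguishing_colouring S k c \<longleftrightarrow> proper_colouring S k c \<and>
     (\<forall>\<pi>\<in>cay_aut S. \<pi> \<noteq> id \<longrightarrow> (\<exists>j<k. \<pi> ` (c -` {j}) \<noteq> c -` {j}))"

definition dist_chromatic_number :: "'a::ab_group_add set \<Rightarrow> nat" where
  "dist_chromatic_number S = (LEAST k. \<exists>c. distinguishing_colouring S k c)"

end

theory Submission imports Defs "HOL-Combinatorics.Orbits" begin

lemma perm_of_bij: "bij (f::'a::finite\<Rightarrow>'a) \<Longrightarrow> permutation f"
  by (simp add: permutation)

lemma orbit_same:
  assumes "permutation f" "t \<in> orbit f s" shows "orbit f t = orbit f s"
proof
  have ss: "s \<in> orbit f s" by (rule permutation_self_in_orbit[OF assms(1)])
  have st: "s \<in> orbit f t" by (rule orbit_swap[OF ss assms(2)])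
  show "orbit f t \<subseteq> orbit f s"
  proof
    fix x assume "x \<in> orbit f t" then show "x \<in> orbit f s" by (rule orbit_trans[OF _ assms(2)])
  qed
  show "orbit f s \<subseteq> orbit f t"
  proof
    fix x assume "x \<in> orbit f s" then show "x \<in> orbit f t" by (rule orbit_trans[OF _ st])
  qed
qed

lemma orbit_in_inv:
  assumes "f ` T = T" "x \<in> T" shows "orbit f x \<subseteq> T"
proof
  fix y assume "y \<in> orbit f x" then show "y \<in> T"
  proof induct
    case base
    have "f x \<in> f ` T" using assms(2) by (rule imageI)
    then show ?case using assms(1) by simp
  next
    case (step y)
    have "f y \<in> f ` T" using step(2) by (rule imageI)
    then show ?case using assms(1) by simp
  qed
qed

definition orbs :: "('a \<Rightarrow> 'a) \<Rightarrow> 'a set \<Rightarrow> 'a set set" where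
  "orbs f C = {orbit f x | x. x \<in> C \<and> orbit f x \<subseteq> C}"

lemma inv_count:
  fixes f :: "'a::finite \<Rightarrow> 'a"
  assumes "bij f"
  shows "card {T. T \<subseteq> C \<and> f ` T = T} \<le> 2 ^ card (orbs f C)"
proof -
  have p: "permutation f" using assms by (rule perm_of_bij)
  let ?h = "\<lambda>T. {X \<in> orbs f C. X \<subseteq> T}"
  have rep: "T = \<Union>(?h T)" if "T \<subseteq> C" "f ` T = T" for T
  proof
    show "T \<subseteq> \<Union>(?h T)"
    proof
      fix x assume x: "x \<in> T"
      have o: "orbit f x \<subseteq> T" using orbit_in_inv[OF that(2) x] .
      then have "orbit f x \<in> ?h T" using that(1) x unfolding orbs_def by blast
      moreover have "x \<in> orbit f x" using permutation_self_in_orbit[OF p] .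
      ultimately show "x \<in> \<Union>(?h T)" by blast
    qed
  qed blast
  have "inj_on ?h {T. T \<subseteq> C \<and> f ` T = T}"
  proof (rule inj_onI)
    fix T1 T2 assume a: "T1 \<in> {T. T \<subseteq> C \<and> f ` T = T}" "T2 \<in> {T. T \<subseteq> C \<and> f ` T = T}"
      and e: "?h T1 = ?h T2"
    have "T1 = \<Union>(?h T1)" using rep a(1) by blast
    also have "\<dots> = \<Union>(?h T2)" using e by simp
    also have "\<dots> = T2" using rep a(2) by blast
    finally show "T1 = T2" .
  qed
  moreover have "?h ` {T. T \<subseteq> C \<and> f ` T = T} \<subseteq> Pow (orbs f C)" by blast
  ultimately have "card {T. T \<subseteq> C \<and> f ` T = T} \<le> card (Pow (orbs f C))"
    by (intro card_inj_on_le) auto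
  also have "\<dots> = 2 ^ card (orbs f C)" by (simp add: card_Pow)
  finally show ?thesis .
qed

lemma orbs_bound:
  fixes f :: "'a::finite \<Rightarrow> 'a"
  assumes "bij f"
  shows "2 * card (orbs f C) \<le> card C + card {x\<in>C. f x = x}"
proof -
  have p: "permutation f" using assms by (rule perm_of_bij)
  define Fx where "Fx = {x\<in>C. f x = x}"
  define Q1 where "Q1 = {X \<in> orbs f C. \<exists>x. X = {x}}"
  define Q2 where "Q2 = orbs f C - Q1"
  have Q1: "Q1 \<subseteq> (\<lambda>x. {x}) ` Fx"
  proof
    fix X assume "X \<in> Q1"
    then obtain y x where y: "X = orbit f y" "y \<in> C" and x: "X = {x}"
      unfolding Q1_def orbs_def by blast
    have "y \<in> orbit f y" using permutation_self_in_orbit[OF p] .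
    then have "y = x" using x y by blast
    then have "f x = x" using x y orbit_eq_singleton_iff by metis
    then show "X \<in> (\<lambda>x. {x}) ` Fx" using x y \<open>y = x\<close> Fx_def by blast
  qed
  have c1: "card Q1 \<le> card Fx"
    using card_image_le[of Fx "\<lambda>x. {x}"] card_mono[OF _ Q1] by (simp add: Fx_def) 
  have disj: "pairwise disjnt Q2"
  proof (rule pairwiseI)
    fix X Y assume "X \<in> Q2" "Y \<in> Q2" "X \<noteq> Y"
    then obtain x y where xy: "X = orbit f x" "Y = orbit f y"
      unfolding Q2_def orbs_def by blast
    show "disjnt X Y"
    proof (rule ccontr)
      assume "\<not> disjnt X Y"
      then obtain z where "z \<in> orbit f x" "z \<in> orbit f y" using xy unfolding disjnt_def by blast
      then have "X = Y" using orbit_same[OF p] xy by metis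
      then show False using \<open>X \<noteq> Y\<close> by simp
    qed
  qed
  have fin: "finite X" for X :: "'a set" by simp
  have U: "\<Union>Q2 \<subseteq> C - Fx"
  proof
    fix z assume "z \<in> \<Union>Q2"
    then obtain y where y: "orbit f y \<in> Q2" "z \<in> orbit f y" "orbit f y \<subseteq> C"
      unfolding Q2_def orbs_def by blast
    have e: "orbit f z = orbit f y" using orbit_same[OF p y(2)] .
    have "f z \<noteq> z"
    proof
      assume "f z = z"
      then have "orbit f z = {z}" using orbit_eq_singleton_iff by metis
      then show False using y(1) e unfolding Q2_def Q1_def by auto
    qed
    then show "z \<in> C - Fx" using y Fx_def by auto
  qed
  have ge2: "card X \<ge> 2" if inq: "X \<in> Q2" for X
  proof (rule ccontr)
    assume "\<not> card X \<ge> 2"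
    then have c: "card X \<le> 1" by simp
    obtain y where "X = orbit f y" using inq unfolding Q2_def orbs_def by blast
    then have "X \<noteq> {}" using orbit_nonempty by metis
    with c obtain x where "X = {x}"
      by (metis One_nat_def card_0_eq card_1_singletonE fin le_SucE le_zero_eq)
    then show False using inq unfolding Q2_def Q1_def by blast
  qed
  have "2 * card Q2 = (\<Sum>X\<in>Q2. 2)" by simp
  also have "\<dots> \<le> (\<Sum>X\<in>Q2. card X)" by (intro sum_mono ge2)
  also have "\<dots> = card (\<Union>Q2)" using card_Union_disjoint[OF disj] by simp
  also have "\<dots> \<le> card (C - Fx)" by (intro card_mono U) simp
  also have "\<dots> = card C - card Fx" by (simp add: Fx_def card_Diff_subset)
  finally have c2: "2 * card Q2 \<le> card C - card Fx" .
  have "card Fx \<le> card C" unfolding Fx_def by (intro card_mono) auto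
  have "card (orbs f C) \<le> card Q1 + card Q2"
  proof -
    have "orbs f C = Q1 \<union> Q2" unfolding Q2_def Q1_def by blast
    then show ?thesis using card_Un_le by metis
  qed
  then have "2 * card (orbs f C) \<le> card C + card Fx" using c1 c2 \<open>card Fx \<le> card C\<close> by linarith
  then show ?thesis unfolding Fx_def .
qed


lemma refl_fix_bound:
  fixes g :: "'a::{ab_group_add,finite}"
  shows "card {x\<in>C. - x + g = x} \<le> card {x::'a. x + x = 0}"
proof (cases "\<exists>x0. x0 + x0 = g")
  case False
  then have e: "{x\<in>C. - x + g = x} = {}"
    by (auto simp: algebra_simps)
  show ?thesis by (simp only: e card.empty le0)
next
  case True
  then obtain x0 where x0: "x0 + x0 = g" by blast
  have "inj_on (\<lambda>x. x - x0) {x\<in>C. - x + g = x}" by (auto simp: inj_on_def)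
  moreover have "(\<lambda>x. x - x0) ` {x\<in>C. - x + g = x} \<subseteq> {x::'a. x + x = 0}"
  proof
    fix y assume "y \<in> (\<lambda>x. x - x0) ` {x\<in>C. - x + g = x}"
    then obtain x where "y = x - x0" "- x + g = x" by blast
    then have "x + x = g" by (metis add.commute diff_add_cancel diff_conv_add_uminus)
    have "y + y = (x + x) - (x0 + x0)" using \<open>y = x - x0\<close> by (simp add: algebra_simps)
    then show "y \<in> {x::'a. x + x = 0}" using \<open>x + x = g\<close> x0 by simp
  qed
  ultimately show ?thesis by (intro card_inj_on_le) auto
qed

lemma G_props:
  fixes \<pi> :: "'a::{ab_group_add,finite} \<Rightarrow> 'a"
  assumes "\<pi> \<in> transl_inv_group" "\<pi> \<noteq> id"
  shows "bij \<pi> \<and> card {x\<in>C. \<pi> x = x} \<le> card {x::'a. x + x = 0}"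
proof -
  from assms(1) obtain g where g: "\<pi> = (\<lambda>x. x + g) \<or> \<pi> = (\<lambda>x. - x + g)"
    unfolding transl_inv_group_def by blast
  have "inj \<pi>" using g by (auto simp: inj_def)
  then have b: "bij \<pi>" by (simp add: bij_def finite_UNIV_inj_surj)
  show ?thesis
  proof (cases "\<pi> = (\<lambda>x. x + g)")
    case True
    then have "g \<noteq> 0" using assms(2) by (auto simp: fun_eq_iff)
    then have "{x\<in>C. \<pi> x = x} = {}" using True by auto
    then have z: "card {x\<in>C. \<pi> x = x} = 0" by (simp only: card.empty)
    show ?thesis by (rule conjI[OF b]) (simp only: z le0)
  next
    case False
    then have "\<pi> = (\<lambda>x. - x + g)" using g by blast
    then show ?thesis using b refl_fix_bound[of C g] by simp
  qed
qed

lemma card_G: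
  "card (transl_inv_group :: ('a::{ab_group_add,finite} \<Rightarrow> 'a) set) \<le> 2 * card (UNIV::'a set)"
proof -
  have e: "(transl_inv_group :: ('a \<Rightarrow> 'a) set) = range (\<lambda>g x. x + g) \<union> range (\<lambda>g x. - x + g)"
    unfolding transl_inv_group_def by blast
  have "card (range (\<lambda>(g::'a) x. x + g)) \<le> card (UNIV::'a set)" by (rule card_image_le) simp
  moreover have "card (range (\<lambda>(g::'a) x. - x + g)) \<le> card (UNIV::'a set)" by (rule card_image_le) simp
  moreover have "card (range (\<lambda>(g::'a) x. x + g) \<union> range (\<lambda>(g::'a) x. - x + g))
     \<le> card (range (\<lambda>(g::'a) x. x + g)) + card (range (\<lambda>(g::'a) x. - x + g))"
    by (rule card_Un_le)
  ultimately show ?thesis unfolding e by linarith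
qed

lemma pigeon:
  fixes c0 :: "'a::finite \<Rightarrow> nat"
  assumes "\<forall>x. c0 x < k" "k > 0"
  shows "\<exists>j<k. card (UNIV::'a set) \<le> k * card (c0 -` {j})"
proof (rule ccontr)
  assume "\<not> ?thesis"
  then have lt: "\<And>j. j \<in> {..<k} \<Longrightarrow> k * card (c0 -` {j}) < card (UNIV::'a set)"
    by (simp add: not_le)
  have U: "(UNIV::'a set) = (\<Union>j\<in>{..<k}. c0 -` {j})"
    using assms(1) by auto
  have s: "card (UNIV::'a set) \<le> (\<Sum>j\<in>{..<k}. card (c0 -` {j}))"
  proof -
    have "card (\<Union>j\<in>{..<k}. c0 -` {j}) \<le> (\<Sum>j\<in>{..<k}. card (c0 -` {j}))"
      by (rule card_UN_le) simp
    then show ?thesis using U by simp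
  qed
  have "k * (\<Sum>j\<in>{..<k}. card (c0 -` {j})) = (\<Sum>j\<in>{..<k}. k * card (c0 -` {j}))"
    by (simp add: sum_distrib_left)
  also have "\<dots> < (\<Sum>j\<in>{..<k}. card (UNIV::'a set))"
    by (rule sum_strict_mono) (use assms(2) lt in auto)
  also have "\<dots> = k * card (UNIV::'a set)" by simp
  finally have "(\<Sum>j\<in>{..<k}. card (c0 -` {j})) < card (UNIV::'a set)" by simp
  then show False using s by simp
qed

theorem mainTheorem8:
  fixes S :: "'a::{ab_group_add,finite} set"
  assumes "Z2r_times_noncyclic_odd TYPE('a)"
    and "0 \<notin> S" and "\<forall>s\<in>S. - s \<in> S"
    and "cay_aut S = transl_inv_group"
    and "real (chromatic_number S) <
           real (card (UNIV::'a set)) / (real (card {x::'a. x + x = 0}) + 2 * log 2 (2 * real (card (UNIV::'a set))))"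
  shows "dist_chromatic_number S \<le> chromatic_number S + 1"
proof -
  define n where "n = card (UNIV::'a set)"
  define m where "m = card {x::'a. x + x = 0}"
  define G where "G = (transl_inv_group :: ('a\<Rightarrow>'a) set)"
  define \<chi> where "\<chi> = chromatic_number S"
  have ex: "\<exists>c. proper_colouring S n c"
  proof -
    obtain h where h: "bij_betw h (UNIV::'a set) {0..<n}"
      using ex_bij_betw_finite_nat[of "UNIV::'a set"] n_def by auto
    have "proper_colouring S n h" unfolding proper_colouring_def cay_adj_def
    proof safe
      fix x show "h x < n" using h bij_betwE by fastforce
    next
      fix x y assume a: "y - x \<in> S" "h x = h y"
      then have "x = y" using h bij_betw_imp_inj_on inj_on_def by (metis UNIV_I)
      then show False using a assms(2) by simp
    qed
    then show ?thesis by blast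
  qed
  have "\<exists>c. proper_colouring S \<chi> c" unfolding \<chi>_def chromatic_number_def
    by (rule LeastI_ex) (use ex in blast)
  then obtain c0 where c0: "proper_colouring S \<chi> c0" by blast
  have chi_pos: "\<chi> > 0"
  proof (rule ccontr)
    assume "\<not> \<chi> > 0"
    then have "\<chi> = 0" by simp
    then show False using c0 unfolding proper_colouring_def by auto
  qed
  have n_pos: "n > 0" unfolding n_def by (simp add: card_gt_0_iff)
  have m_pos: "m \<ge> 1" unfolding m_def
  proof -
    have "0 \<in> {x::'a. x + x = 0}" by simp
    then have "{x::'a. x + x = 0} \<noteq> {}" by blast
    then show "1 \<le> card {x::'a. x + x = 0}" by (simp add: Suc_leI card_gt_0_iff)
  qed
  obtain j where j: "j < \<chi>" "n \<le> \<chi> * card (c0 -` {j})"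
    using pigeon[of c0 \<chi>] c0 chi_pos unfolding proper_colouring_def n_def by blast
  define C where "C = c0 -` {j}"
  define cC where "cC = card C"
  define D where "D = real m + 2 * log 2 (2 * real n)"
  have logpos: "log 2 (2 * real n) \<ge> 1" using n_pos by simp
  have Dpos: "D > 0" unfolding D_def using logpos m_pos by simp
  have "real \<chi> < real n / D" using assms(5) unfolding D_def n_def m_def \<chi>_def .
  then have "real \<chi> * D < real n" using Dpos by (simp add: pos_less_divide_eq)
  also have "real n \<le> real \<chi> * real cC" using j(2) unfolding cC_def C_def
    by (metis of_nat_le_iff of_nat_mult)
  finally have "D < real cC" using chi_pos by simp
  then have key: "(real cC - real m) / 2 > log 2 (2 * real n)" unfolding D_def by simp
  define B where "B = (\<Union>\<pi>\<in>G - {id}. {T. T \<subseteq> C \<and> \<pi> ` T = T})"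
  define P where "P = 2 powr ((real cC + real m) / 2)"
  have each: "real (card {T. T \<subseteq> C \<and> \<pi> ` T = T}) \<le> P" if "\<pi> \<in> G - {id}" for \<pi>
  proof -
    have gp: "bij \<pi> \<and> card {x\<in>C. \<pi> x = x} \<le> m"
      using G_props[of \<pi> C] that unfolding G_def m_def by blast
    have "2 * card (orbs \<pi> C) \<le> cC + m"
      using orbs_bound[of \<pi> C] gp unfolding cC_def by linarith
    then have "2 * real (card (orbs \<pi> C)) \<le> real cC + real m"
      by (metis of_nat_add of_nat_le_iff of_nat_mult of_nat_numeral)
    then have k: "real (card (orbs \<pi> C)) \<le> (real cC + real m) / 2" by simp
    have "real (card {T. T \<subseteq> C \<and> \<pi> ` T = T}) \<le> real (2 ^ card (orbs \<pi> C))"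
      using inv_count[of \<pi> C] gp by linarith
    also have "\<dots> = 2 powr real (card (orbs \<pi> C))" by (simp add: powr_realpow)
    also have "\<dots> \<le> P" unfolding P_def by (rule powr_mono[OF k]) simp
    finally show ?thesis .
  qed
  have "real (card B) \<le> (\<Sum>\<pi>\<in>G - {id}. real (card {T. T \<subseteq> C \<and> \<pi> ` T = T}))"
  proof -
    have "card B \<le> (\<Sum>\<pi>\<in>G - {id}. card {T. T \<subseteq> C \<and> \<pi> ` T = T})"
      unfolding B_def by (rule card_UN_le) simp
    then have "real (card B) \<le> real (\<Sum>\<pi>\<in>G - {id}. card {T. T \<subseteq> C \<and> \<pi> ` T = T})"
      by (simp only: of_nat_le_iff)
    also have "\<dots> = (\<Sum>\<pi>\<in>G - {id}. real (card {T. T \<subseteq> C \<and> \<pi> ` T = T}))"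
      by (rule of_nat_sum)
    finally show ?thesis .
  qed
  also have "\<dots> \<le> real (card (G - {id})) * P"
    using sum_bounded_above[of "G - {id}" "\<lambda>\<pi>. real (card {T. T \<subseteq> C \<and> \<pi> ` T = T})" P] each
    by simp
  also have "\<dots> \<le> real (2 * n) * P"
  proof -
    have "card (G - {id}) \<le> card G" by (rule card_Diff1_le)
    also have "\<dots> \<le> 2 * n" using card_G unfolding G_def n_def by blast
    finally show ?thesis unfolding P_def by (intro mult_right_mono) auto
  qed
  also have "\<dots> < 2 powr real cC"
  proof -
    have e: "(real cC + real m) / 2 + (real cC - real m) / 2 = real cC" by (simp add: field_simps)
    have "P * 2 powr ((real cC - real m) / 2) = 2 powr ((real cC + real m) / 2 + (real cC - real m) / 2)"
      unfolding P_def by (rule powr_add[symmetric])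
    then have eq: "2 powr real cC = P * 2 powr ((real cC - real m) / 2)" by (simp only: e)
    have lt: "2 powr (log 2 (2 * real n)) < 2 powr ((real cC - real m) / 2)"
      using key by (intro powr_less_mono) auto
    have l2: "2 powr (log 2 (2 * real n)) = 2 * real n" using n_pos by simp
    have Pp: "P > 0" unfolding P_def by simp
    have "real (2 * n) * P = P * (2 * real n)" by simp
    also have "\<dots> < P * 2 powr ((real cC - real m) / 2)"
      using lt l2 Pp by (intro mult_strict_left_mono) auto
    finally show ?thesis using eq by simp
  qed
  also have "\<dots> = real (card (Pow C))" by (simp add: card_Pow powr_realpow cC_def)
  finally have "card B < card (Pow C)" by linarith
  then obtain T where T: "T \<subseteq> C" "T \<notin> B"
  proof -
    have "\<not> Pow C \<subseteq> B"
    proof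
      assume "Pow C \<subseteq> B"
      then have "card (Pow C) \<le> card B" by (intro card_mono) simp
      then show False using \<open>card B < card (Pow C)\<close> by simp
    qed
    then obtain T0 where "T0 \<in> Pow C" "T0 \<notin> B" by blast
    then show ?thesis using that by simp
  qed
  have Tgood: "\<pi> ` T \<noteq> T" if pg: "\<pi> \<in> G" "\<pi> \<noteq> id" for \<pi>
  proof
    assume "\<pi> ` T = T"
    then have "T \<in> {T. T \<subseteq> C \<and> \<pi> ` T = T}" using T(1) by simp
    moreover have "\<pi> \<in> G - {id}" using pg by simp
    ultimately have "T \<in> B" unfolding B_def by (rule UN_I[rotated])
    then show False using T(2) by simp
  qed
  define c' where "c' = (\<lambda>x. if x \<in> T then \<chi> else c0 x)"
  have propc: "proper_colouring S (\<chi> + 1) c'"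
    unfolding proper_colouring_def
  proof safe
    fix x show "c' x < \<chi> + 1" using c0 unfolding c'_def proper_colouring_def
      by (simp add: less_SucI)
  next
    fix x y assume a: "cay_adj S x y" "c' x = c' y"
    have nq: "c0 x \<noteq> c0 y" using c0 a(1) unfolding proper_colouring_def by blast
    have lx: "c0 x < \<chi>" "c0 y < \<chi>" using c0 unfolding proper_colouring_def by auto
    show False
    proof (cases "x \<in> T")
      case True
      show False
      proof (cases "y \<in> T")
        case True
        then have "c0 y = j" "c0 x = j" using \<open>x \<in> T\<close> T(1) unfolding C_def by auto
        then show False using nq by simp
      next
        case False
        then show False using a(2) \<open>x \<in> T\<close> lx unfolding c'_def by simp
      qed
    next
      case False
      show False
      proof (cases "y \<in> T")
        case True
        then show False using a(2) \<open>x \<notin> T\<close> lx unfolding c'_def by simp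
      next
        case False
        then show False using a(2) \<open>x \<notin> T\<close> nq unfolding c'_def by simp
      qed
    qed
  qed
  have cls: "c' -` {\<chi>} = T"
    using c0 unfolding c'_def proper_colouring_def by (auto split: if_splits) 
  have "distinguishing_colouring S (\<chi> + 1) c'"
    unfolding distinguishing_colouring_def
  proof (intro conjI propc ballI impI)
    fix \<pi> assume "\<pi> \<in> cay_aut S" "\<pi> \<noteq> id"
    then have "\<pi> ` (c' -` {\<chi>}) \<noteq> c' -` {\<chi>}" using Tgood assms(4) cls unfolding G_def by simp
    moreover have "\<chi> < \<chi> + 1" by simp
    ultimately show "\<exists>j<\<chi> + 1. \<pi> ` (c' -` {j}) \<noteq> c' -` {j}" by blast
  qed
  then have "\<exists>c. distinguishing_colouring S (\<chi> + 1) c" by blast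
  then have "dist_chromatic_number S \<le> \<chi> + 1" unfolding dist_chromatic_number_def
    by (rule Least_le)
  then show ?thesis unfolding \<chi>_def .
qed

end
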